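(* Let $A_1,A_2,A_3$ be three distinct points lying on a gyrocircle with gyrocenter $O$ and gyroradius $R$ in the Einstein gyrovector space $\mathbb{R}^n_s$, $n\ge 2$. Let $\theta=\angle A_1A_3A_2$ be the gyroangle at $A_3$ of gyrotriangle $A_1A_2A_3$ (the inscribed gyroangle), and let $2\phi=\angle A_1OA_2$ be the gyrocentral gyroangle, so that $\theta$ and $2\phi$ subtend the same gyroarc $\widehat{A_1A_2}$. Then $$\sin\theta=\frac{2\gamma_R}{\sqrt{(\gamma_{13}+1)(\gamma_{23}+1)}}\,\sin\phi ,$$ where $\gamma_R=(1-R^2/s^2)^{-1/2}$, $\gamma_{13}=\gamma_{\ominus A_1\oplus A_3}$ and $\gamma_{23}=\gamma_{\ominus A_2\oplus A_3}$.
   Context: Fix $s>0$ and $n\ge2$. The Einstein gyrovector space is the open ball $\mathbb{R}^n_s=\{v\in\mathbb{R}^n:\|v\|<s\}$ with Einstein addition $u\oplus v=\frac{1}{1+u\cdot v/s^2}\{u+\frac{1}{\gamma_u}v+\frac{1}{s^2}\frac{\gamma_u}{1+\gamma_u}(u\cdot v)u\}$, where $\gamma_v=(1-\|v\|^2/s^2)^{-1/2}$ (and for a real $0\le a<s$, $\gamma_a=(1-a^2/s^2)^{-1/2}$); $\ominus v=-v$. The gyrodistance between $A,B$ is $\|\ominus A\oplus B\|$. Gyrolines (resp. gyrosegments, gyrorays) in this model are the intersections of Euclidean lines (resp. are Euclidean segments, rays) with the ball. The gyroangle at vertex $A$ between gyrorays $AB$ and $AC$ is the angle $\alpha\in[0,\pi]$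 with $\cos\alpha=\frac{(\ominus A\oplus B)\cdot(\ominus A\oplus C)}{\|\ominus A\oplus B\|\,\|\ominus A\oplus C\|}$. For a gyrobarycentrically independent triple $\{A_1,A_2,A_3\}$ (i.e. $\ominus A_1\oplus A_2,\ominus A_1\oplus A_3$ linearly independent) its gyroplane is $(A_1\oplus\mathrm{span}\{\ominus A_1\oplus A_2,\ominus A_1\oplus A_3\})\cap\mathbb{R}^n_s$. A gyrocircle with gyrocenter $O$ and gyroradius $r$ is the set of points of a gyroplane containing $O$ at gyrodistance $r$ from $O$. Notation $\gamma_{ij}=\gamma_{\ominus A_i\oplus A_j}$. *)

theory Defs
  imports "HOL-Analysis.Analysis"
begin

text \<open>Einstein gyrovector space of radius s, realised on vectors of type real^'n.\<close>

definition sball :: "real \<Rightarrow> ('a::real_inner) set" where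
  "sball s = {v. norm v < s}"

definition gam :: "real \<Rightarrow> 'a::real_inner \<Rightarrow> real" where
  "gam s v = 1 / sqrt (1 - (norm v)^2 / s^2)"

definition gamr :: "real \<Rightarrow> real \<Rightarrow> real" where
  "gamr s a = 1 / sqrt (1 - a^2 / s^2)"

definition eadd :: "real \<Rightarrow> 'a::real_inner \<Rightarrow> 'a \<Rightarrow> 'a" where
  "eadd s u v = (1 / (1 + (u \<bullet> v) / s^2)) *\<^sub>R
     (u + (1 / gam s u) *\<^sub>R v + ((1 / s^2) * (gam s u / (1 + gam s u)) * (u \<bullet> v)) *\<^sub>R u)"

definition gyrodist :: "real \<Rightarrow> 'a::real_inner \<Rightarrow> 'a \<Rightarrow> real" where
  "gyrodist s A B = norm (eadd s (- A) B)"

definition gyroangle :: "real \<Rightarrow> 'a::real_inner \<Rightarrow> 'a \<Rightarrow> 'a \<Rightarrow> real" where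
  "gyroangle s A B C =
     arccos (((eadd s (- A) B) \<bullet> (eadd s (- A) C)) /
             (norm (eadd s (- A) B) * norm (eadd s (- A) C)))"

definition gyro_bary_indep :: "real \<Rightarrow> 'a::real_inner \<Rightarrow> 'a \<Rightarrow> 'a \<Rightarrow> bool" where
  "gyro_bary_indep s A1 A2 A3 \<longleftrightarrow>
     (\<forall>a b::real. a *\<^sub>R eadd s (- A1) A2 + b *\<^sub>R eadd s (- A1) A3 = 0 \<longrightarrow> a = 0 \<and> b = 0)"

definition gyroplane :: "real \<Rightarrow> 'a::real_inner \<Rightarrow> 'a \<Rightarrow> 'a \<Rightarrow> 'a set" where
  "gyroplane s A1 A2 A3 =
     {eadd s A1 x | x. x \<in> span {eadd s (- A1) A2, eadd s (- A1) A3} \<and> x \<in> sball s} \<inter> sball s"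

text \<open>Gyrocircle with gyrocenter O and gyroradius r in the gyroplane P (P should contain O).\<close>
definition gyrocircle :: "real \<Rightarrow> 'a::real_inner set \<Rightarrow> 'a \<Rightarrow> real \<Rightarrow> 'a set" where
  "gyrocircle s P Oc r = {X \<in> P. gyrodist s Oc X = r}"

end

theory Submission
  imports Defs
begin

lemma inner_lt:
  fixes a b :: "'a::real_inner"
  assumes "norm a < s" "norm b < s"
  shows "\<bar>a \<bullet> b\<bar> < s^2"
proof -
  have "\<bar>a \<bullet> b\<bar> \<le> norm a * norm b" by (rule Cauchy_Schwarz_ineq2)
  also have "\<dots> < s * s" using assms by (meson le_less_trans mult_strict_mono' norm_ge_zero)
  finally show ?thesis by (simp add: power2_eq_square)
qed

lemma gam_facts:
  fixes a :: "'a::real_inner"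
  assumes "norm a < s"
  shows "gam s a > 0" "(gam s a)^2 * (1 - (a \<bullet> a)/s^2) = 1" "1 - (a \<bullet> a)/s^2 > 0"
proof -
  have s: "s > 0" using assms norm_ge_zero[of a] by linarith
  have ns: "(norm a)^2 < s^2" using assms by (simp add: power_strict_mono)
  hence p: "1 - (norm a)^2/s^2 > 0" using s by (simp add: field_simps)
  thus "1 - (a \<bullet> a)/s^2 > 0" by (simp add: power2_norm_eq_inner)
  show "gam s a > 0" using p unfolding gam_def by simp
  have "(gam s a)^2 = 1 / (1 - (norm a)^2/s^2)" unfolding gam_def using p
    by (simp add: power_divide)
  thus "(gam s a)^2 * (1 - (a \<bullet> a)/s^2) = 1" using p s ns assms
    by (simp add: power2_norm_eq_inner[symmetric])
qed

lemma span2: "x \<in> span {p, q} \<Longrightarrow> \<exists>a b. x = a *\<^sub>R p + b *\<^sub>R q"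
  by (auto simp: span_insert span_singleton) (metis add.commute diff_add_cancel)

lemma alg_bracket0:
  fixes g s k ab ac bc :: real
  assumes g: "g \<noteq> 0" and s: "s \<noteq> 0" and k: "k * ((1+g) * s^2) = g"
  shows "bc/g^2 - (1 - k*ac)*ab/g
     - (1 - k*ab)*ac/g + (1 - k*ab)*(1 - k*ac)*(s^2 * (g^2 - 1) / g^2)
     = (s^2 - ab)*(s^2 - ac)/s^2 - (s^2 - bc)/g^2"
proof -
  have d: "bc * s^2 - (1 - k*ac)*ab*g * s^2
     - (1 - k*ab)*ac*g * s^2 + (1 - k*ab)*(1 - k*ac)*(s^2 * (g^2 - 1)) * s^2
     - ((s^2 - ab)*(s^2 - ac)*g^2 - (s^2 - bc) * s^2)
     = (k * ((1+g) * s^2) - g) * ((k * s^2*(g-1)+g)*ab*ac - s^2*(g-1)*(ab+ac))"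
      by (simp add: algebra_simps power2_eq_square power4_eq_xxxx)
  have e1: "bc/g^2 - (1 - k*ac)*ab/g
     - (1 - k*ab)*ac/g + (1 - k*ab)*(1 - k*ac)*(s^2 * (g^2 - 1) / g^2)
     = (bc * s^2 - (1 - k*ac)*ab*g * s^2
     - (1 - k*ab)*ac*g * s^2 + (1 - k*ab)*(1 - k*ac)*(s^2 * (g^2 - 1)) * s^2) / (g^2 * s^2)"
    using g s by (simp add: field_simps power2_eq_square)
  have e2: "(s^2 - ab)*(s^2 - ac)/s^2 - (s^2 - bc)/g^2
     = ((s^2 - ab)*(s^2 - ac)*g^2 - (s^2 - bc) * s^2) / (g^2 * s^2)"
    using g s by (simp add: field_simps)
  show ?thesis unfolding e1 e2 using d k by simp
qed

lemma alg_fin: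
  fixes p q r g s :: real
  assumes "p > 0" "q > 0" "g > 0" "s > 0"
  shows "(s^2/p) * (s^2/q) * (p*q/s^2 - r/g^2) = s^2 - s^2 * s^2 * r / (g^2 * p * q)"
  using assms by (simp add: field_simps)

lemma gam_neg[simp]: "gam s (- a) = gam s a"
  by (simp add: gam_def)

lemma eadd_neg_form:
  fixes A B :: "'a::real_inner"
  shows "eadd s (- A) B = (1/(1 - (A \<bullet> B)/s^2)) *\<^sub>R
     ((1/gam s A) *\<^sub>R B - (1 - (gam s A/((1+gam s A) * s^2)) * (A \<bullet> B)) *\<^sub>R A)"
  unfolding eadd_def by (simp add: algebra_simps)

lemma eadd_inner:
  fixes A B C :: "'a::real_inner"
  assumes a: "norm A < s" and b: "norm B < s" and c: "norm C < s"
  shows "eadd s (- A) B \<bullet> eadd s (- A) C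
     = s^2 - s^2 * s^2 * (s^2 - B \<bullet> C) / ((gam s A)^2 * (s^2 - A \<bullet> B) * (s^2 - A \<bullet> C))"
proof -
  define g where "g = gam s A"
  define k where "k = g/((1+g) * s^2)"
  have s: "s > 0" using a norm_ge_zero[of A] by linarith
  have g0: "g > 0" using gam_facts(1)[OF a] g_def by simp
  have gg: "g^2 * (1 - (A \<bullet> A)/s^2) = 1" using gam_facts(2)[OF a] g_def by simp
  have aa: "A \<bullet> A = s^2 * (g^2 - 1) / g^2" using gg g0 s by (simp add: field_simps)
  have k: "k * ((1+g) * s^2) = g" unfolding k_def using g0 s by simp
  have ab: "s^2 - A \<bullet> B > 0" using inner_lt[OF a b] by linarith
  have ac: "s^2 - A \<bullet> C > 0" using inner_lt[OF a c] by linarith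
  have l1: "1/(1 - (A \<bullet> B)/s^2) = s^2/(s^2 - A \<bullet> B)" using s by (simp add: field_simps)
  have l2: "1/(1 - (A \<bullet> C)/s^2) = s^2/(s^2 - A \<bullet> C)" using s by (simp add: field_simps)
  define x where "x = s^2/(s^2 - A \<bullet> B)"
  define y where "y = s^2/(s^2 - A \<bullet> C)"
  define mb where "mb = 1 - k*(A \<bullet> B)"
  define mc where "mc = 1 - k*(A \<bullet> C)"
  define ig where "ig = 1/g"
  have "eadd s (- A) B \<bullet> eadd s (- A) C =
     (x *\<^sub>R (ig *\<^sub>R B - mb *\<^sub>R A)) \<bullet> (y *\<^sub>R (ig *\<^sub>R C - mc *\<^sub>R A))"
    unfolding eadd_neg_form l1 l2 g_def[symmetric] k_def[symmetric] x_def y_def mb_def mc_def ig_def ..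
  also have "\<dots> = x * y * (ig*ig*(B \<bullet> C) - ig*mc*(A \<bullet> B) - mb*ig*(A \<bullet> C) + mb*mc*(A \<bullet> A))"
    by (simp add: inner_diff_left inner_diff_right inner_commute algebra_simps)
  also have "\<dots> = (s^2/(s^2 - A \<bullet> B)) * (s^2/(s^2 - A \<bullet> C)) *
     ((B \<bullet> C)/g^2 - (1 - k*(A \<bullet> C))*(A \<bullet> B)/g
     - (1 - k*(A \<bullet> B))*(A \<bullet> C)/g + (1 - k*(A \<bullet> B))*(1 - k*(A \<bullet> C))*(A \<bullet> A))"
    unfolding x_def y_def mb_def mc_def ig_def by (simp add: power2_eq_square)
  also have "\<dots> = (s^2/(s^2 - A \<bullet> B)) * (s^2/(s^2 - A \<bullet> C)) *
     ((s^2 - A \<bullet> B)*(s^2 - A \<bullet> C)/s^2 - (s^2 - B \<bullet> C)/g^2)"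
    unfolding aa using alg_bracket0[OF _ _ k] g0 s by simp
  also have "\<dots> = s^2 - s^2 * s^2 * (s^2 - B \<bullet> C) / (g^2 * (s^2 - A \<bullet> B) * (s^2 - A \<bullet> C))"
    using alg_fin[OF ab ac g0 s] by simp
  finally show ?thesis unfolding g_def .
qed


definition GG :: "real \<Rightarrow> 'a::real_inner \<Rightarrow> 'a \<Rightarrow> real" where
  "GG s X Y = gam s X * gam s Y * (1 - (X \<bullet> Y)/s^2)"

lemma GG_sym: "GG s X Y = GG s Y X"
  unfolding GG_def by (simp add: inner_commute)

lemma s_pos: "norm (A::'a::real_inner) < s \<Longrightarrow> s > 0"
  using norm_ge_zero[of A] by linarith

lemma gam_sq:
  fixes a :: "'a::real_inner"
  assumes "norm a < s"
  shows "(gam s a)^2 = s^2 / (s^2 - a \<bullet> a)" "s^2 - a \<bullet> a > 0"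
proof -
  have s: "s > 0" by (rule s_pos[OF assms])
  have p: "1 - (a \<bullet> a)/s^2 > 0" by (rule gam_facts(3)[OF assms])
  thus "s^2 - a \<bullet> a > 0" using s by (simp add: field_simps)
  show "(gam s a)^2 = s^2 / (s^2 - a \<bullet> a)" using gam_facts(2)[OF assms] p s
    by (simp add: field_simps)
qed

lemma GG_pos:
  fixes A B :: "'a::real_inner"
  assumes "norm A < s" "norm B < s"
  shows "GG s A B > 0"
proof -
  have "1 - (A \<bullet> B)/s^2 > 0" using inner_lt[OF assms] s_pos[OF assms(1)]
    by (simp add: field_simps)
  thus ?thesis unfolding GG_def using gam_facts(1)[OF assms(1)] gam_facts(1)[OF assms(2)] by simp
qed

lemma GG_self:
  fixes A :: "'a::real_inner"
  assumes "norm A < s"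
  shows "GG s A A = 1"
proof -
  have "GG s A A = (gam s A)^2 * (1 - (A \<bullet> A)/s^2)" unfolding GG_def by (simp add: power2_eq_square)
  thus ?thesis using gam_facts(2)[OF assms] by simp
qed

lemma GG_sq:
  fixes A B :: "'a::real_inner"
  assumes a: "norm A < s" and b: "norm B < s"
  shows "(GG s A B)^2 = (gam s A)^2 * (s^2 - A \<bullet> B)^2 / (s^2 * (s^2 - B \<bullet> B))"
proof -
  have s: "s > 0" by (rule s_pos[OF a])
  have "(GG s A B)^2 = (gam s A)^2 * (gam s B)^2 * (1 - (A \<bullet> B)/s^2)^2"
    unfolding GG_def by (simp add: power_mult_distrib)
  also have "\<dots> = (gam s A)^2 * (s^2 / (s^2 - B \<bullet> B)) * ((s^2 - A \<bullet> B)/s^2)^2"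
    unfolding gam_sq(1)[OF b] using s by (simp add: field_simps)
  also have "\<dots> = (gam s A)^2 * (s^2 - A \<bullet> B)^2 / (s^2 * (s^2 - B \<bullet> B))"
    using s gam_sq(2)[OF b] by (simp add: field_simps power2_eq_square)
  finally show ?thesis .
qed

lemma inner_eadd_G:
  fixes A B C :: "'a::real_inner"
  assumes a: "norm A < s" and b: "norm B < s" and c: "norm C < s"
  shows "eadd s (- A) B \<bullet> eadd s (- A) C = s^2 * (1 - GG s B C / (GG s A B * GG s A C))"
proof -
  have s: "s > 0" by (rule s_pos[OF a])
  have ga: "gam s A > 0" "gam s B > 0" "gam s C > 0"
    using gam_facts(1) a b c by auto
  have ab: "s^2 - A \<bullet> B > 0" using inner_lt[OF a b] by linarith
  have ac: "s^2 - A \<bullet> C > 0" using inner_lt[OF a c] by linarith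
  have q: "\<And>t. 1 - t/s^2 = (s^2 - t)/s^2" using s by (simp add: field_simps)
  have gen: "\<And>pa pb pc x y z::real. pa > 0 \<Longrightarrow> pb > 0 \<Longrightarrow> pc > 0 \<Longrightarrow> y > 0 \<Longrightarrow> z > 0 \<Longrightarrow>
     (pb*pc*(x/s^2))/((pa*pb*(y/s^2))*(pa*pc*(z/s^2))) = s^2 * x / (pa^2 * y * z)"
    using s by (simp add: field_simps power2_eq_square)
  have e: "GG s B C / (GG s A B * GG s A C) = s^2 * (s^2 - B \<bullet> C) / ((gam s A)^2 * (s^2 - A \<bullet> B) * (s^2 - A \<bullet> C))"
    unfolding GG_def q by (rule gen[OF ga(1) ga(2) ga(3) ab ac])
  show ?thesis unfolding eadd_inner[OF a b c] e by (simp add: field_simps)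
qed

lemma norm_eadd_sq:
  fixes A B :: "'a::real_inner"
  assumes a: "norm A < s" and b: "norm B < s"
  shows "(norm (eadd s (- A) B))^2 = s^2 * (1 - 1 / (GG s A B)^2)"
proof -
  have "(norm (eadd s (- A) B))^2 = s^2 * (1 - GG s B B / (GG s A B * GG s A B))"
    unfolding power2_norm_eq_inner inner_eadd_G[OF a b b] ..
  thus ?thesis using GG_self[OF b] by (simp add: power2_eq_square)
qed

lemma GG_ge1:
  fixes A B :: "'a::real_inner"
  assumes a: "norm A < s" and b: "norm B < s"
  shows "GG s A B \<ge> 1"
proof -
  have s: "s > 0" by (rule s_pos[OF a])
  have p: "GG s A B > 0" by (rule GG_pos[OF a b])
  have "s^2 * (1 - 1 / (GG s A B)^2) \<ge> 0" unfolding norm_eadd_sq[OF a b, symmetric] by simp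
  hence "1 / (GG s A B)^2 \<le> 1" using s by (simp add: zero_le_mult_iff)
  moreover have q: "(GG s A B)^2 > 0" using p by simp
  ultimately have "1 \<le> (GG s A B)^2" by (simp add: divide_le_eq)
  thus ?thesis using power2_le_imp_le[of 1 "GG s A B"] p by simp
qed

lemma GG_eq1:
  fixes A B :: "'a::real_inner"
  assumes a: "norm A < s" and b: "norm B < s" and e: "GG s A B = 1"
  shows "A = B"
proof -
  have s: "s > 0" by (rule s_pos[OF a])
  have aa: "s^2 - A \<bullet> A > 0" and bb: "s^2 - B \<bullet> B > 0" using gam_sq a b by auto
  have ab: "s^2 - A \<bullet> B > 0" using inner_lt[OF a b] by linarith
  have ga: "gam s A > 0" using gam_facts(1)[OF a] .
  have "1 = (gam s A)^2 * (s^2 - A \<bullet> B)^2 / (s^2 * (s^2 - B \<bullet> B))"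
    using GG_sq[OF a b] e by (simp only: power_one)
  also have "\<dots> = (s^2 - A \<bullet> B)^2 / ((s^2 - A \<bullet> A) * (s^2 - B \<bullet> B))"
  proof -
    have gen2: "\<And>p q X::real. p > 0 \<Longrightarrow> q > 0 \<Longrightarrow> (s^2/p) * X / (s^2*q) = X/(p*q)"
      using s by (simp add: field_simps)
    show ?thesis unfolding gam_sq(1)[OF a] by (rule gen2[OF aa bb])
  qed
  finally have "(s^2 - A \<bullet> B)^2 - (s^2 - A \<bullet> A) * (s^2 - B \<bullet> B) = 0"
    using aa bb by (simp add: field_simps)
  moreover have "(s^2 - A \<bullet> B)^2 - (s^2 - A \<bullet> A) * (s^2 - B \<bullet> B)
      = (s^2 - A \<bullet> A) * ((B - A) \<bullet> (B - A)) + (A \<bullet> (B - A))^2"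
  proof -
    have e1: "(B - A) \<bullet> (B - A) = B \<bullet> B - 2 * (A \<bullet> B) + A \<bullet> A"
      by (simp add: inner_diff_right inner_diff_left inner_commute)
    have e2: "A \<bullet> (B - A) = A \<bullet> B - A \<bullet> A" by (simp add: inner_diff_right)
    show ?thesis unfolding e1 e2 by algebra
  qed
  ultimately have "(s^2 - A \<bullet> A) * ((B - A) \<bullet> (B - A)) + (A \<bullet> (B - A))^2 = 0" by simp
  moreover have "(s^2 - A \<bullet> A) * ((B - A) \<bullet> (B - A)) \<ge> 0" using aa by simp
  ultimately have "(s^2 - A \<bullet> A) * ((B - A) \<bullet> (B - A)) = 0"
    by (smt (verit) zero_le_power2)
  hence "(B - A) \<bullet> (B - A) = 0" using aa by simp
  thus ?thesis by simp
qed

lemma GG_gt1: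
  fixes A B :: "'a::real_inner"
  assumes a: "norm A < s" and b: "norm B < s" and ne: "A \<noteq> B"
  shows "GG s A B > 1"
proof -
  have "GG s A B \<noteq> 1" using GG_eq1[OF a b] ne by blast
  thus ?thesis using GG_ge1[OF a b] by linarith
qed

lemma gam_eadd:
  fixes A B :: "'a::real_inner"
  assumes a: "norm A < s" and b: "norm B < s"
  shows "gam s (eadd s (- A) B) = GG s A B"
proof -
  have s: "s > 0" by (rule s_pos[OF a])
  have p: "GG s A B > 0" by (rule GG_pos[OF a b])
  have "1 - (norm (eadd s (- A) B))^2/s^2 = 1 / (GG s A B)^2"
    unfolding norm_eadd_sq[OF a b] using s by simp
  hence "sqrt (1 - (norm (eadd s (- A) B))^2/s^2) = 1 / GG s A B"
    using p by (simp add: real_sqrt_divide)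
  thus ?thesis unfolding gam_def by simp
qed


lemma norm_eadd:
  fixes A B :: "'a::real_inner"
  assumes a: "norm A < s" and b: "norm B < s"
  shows "norm (eadd s (- A) B) = s * sqrt ((GG s A B)^2 - 1) / GG s A B"
proof -
  have s: "s > 0" by (rule s_pos[OF a])
  have p: "GG s A B > 0" by (rule GG_pos[OF a b])
  have "norm (eadd s (- A) B) = sqrt ((norm (eadd s (- A) B))^2)" by simp
  also have "\<dots> = sqrt (s^2 * (((GG s A B)^2 - 1) / (GG s A B)^2))"
    unfolding norm_eadd_sq[OF a b] using p by (simp add: field_simps)
  also have "\<dots> = s * sqrt ((GG s A B)^2 - 1) / GG s A B"
    using s p by (simp add: real_sqrt_mult real_sqrt_divide)
  finally show ?thesis .
qed

lemma ratio_G: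
  fixes A B C :: "'a::real_inner"
  assumes a: "norm A < s" and b: "norm B < s" and c: "norm C < s"
    and nb: "A \<noteq> B" and nc: "A \<noteq> C"
  shows "(eadd s (- A) B \<bullet> eadd s (- A) C) / (norm (eadd s (- A) B) * norm (eadd s (- A) C))
       = (GG s A B * GG s A C - GG s B C) / (sqrt ((GG s A B)^2 - 1) * sqrt ((GG s A C)^2 - 1))"
proof -
  have s: "s > 0" by (rule s_pos[OF a])
  have p1: "GG s A B > 1" by (rule GG_gt1[OF a b nb])
  have p2: "GG s A C > 1" by (rule GG_gt1[OF a c nc])
  have q1: "sqrt ((GG s A B)^2 - 1) > 0" using one_less_power[OF p1, of 2] by simp
  have q2: "sqrt ((GG s A C)^2 - 1) > 0" using one_less_power[OF p2, of 2] by simp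
  have gen: "\<And>x y z qb qc::real. x > 0 \<Longrightarrow> y > 0 \<Longrightarrow> qb > 0 \<Longrightarrow> qc > 0 \<Longrightarrow>
     s^2 * (1 - z/(x*y)) / ((s*qb/x)*(s*qc/y)) = (x*y - z)/(qb*qc)"
    using s by (simp add: field_simps power2_eq_square)
  show ?thesis unfolding inner_eadd_G[OF a b c] norm_eadd[OF a b] norm_eadd[OF a c]
    by (rule gen) (use p1 p2 q1 q2 in auto)
qed

lemma ratio_abs:
  fixes u v :: "'a::real_inner"
  shows "\<bar>(u \<bullet> v) / (norm u * norm v)\<bar> \<le> 1"
proof (cases "norm u * norm v = 0")
  case True thus ?thesis unfolding True by simp
next
  case False
  hence pos: "norm u * norm v > 0" by (simp add: order_le_neq_trans)
  have "\<bar>(u \<bullet> v) / (norm u * norm v)\<bar> = \<bar>u \<bullet> v\<bar> / (norm u * norm v)"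
    using pos by (simp add: abs_divide)
  also have "\<dots> \<le> 1" using pos Cauchy_Schwarz_ineq2[of u v] by (simp only: divide_le_eq_1) simp
  finally show ?thesis .
qed

lemma sin_gyroangle:
  fixes A B C :: "'a::real_inner"
  assumes a: "norm A < s" and b: "norm B < s" and c: "norm C < s"
    and nb: "A \<noteq> B" and nc: "A \<noteq> C"
  shows "sin (gyroangle s A B C) =
     sqrt (1 - ((GG s A B * GG s A C - GG s B C) / (sqrt ((GG s A B)^2 - 1) * sqrt ((GG s A C)^2 - 1)))^2)"
  using sin_arccos_abs[OF ratio_abs[of "eadd s (- A) B" "eadd s (- A) C"]]
  unfolding gyroangle_def ratio_G[OF a b c nb nc] .

lemma cos_gyroangle:
  fixes A B C :: "'a::real_inner"
  assumes a: "norm A < s" and b: "norm B < s" and c: "norm C < s"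
    and nb: "A \<noteq> B" and nc: "A \<noteq> C"
  shows "cos (gyroangle s A B C) =
     (GG s A B * GG s A C - GG s B C) / (sqrt ((GG s A B)^2 - 1) * sqrt ((GG s A C)^2 - 1))"
  using cos_arccos_abs[OF ratio_abs[of "eadd s (- A) B" "eadd s (- A) C"]]
  unfolding gyroangle_def ratio_G[OF a b c nb nc] .

lemma arccos_range: "\<bar>y\<bar> \<le> 1 \<Longrightarrow> 0 \<le> arccos y \<and> arccos y \<le> pi"
  by (intro conjI arccos_lbound arccos_ubound) (auto simp: abs_le_iff)

lemma gyroangle_range: "0 \<le> gyroangle s A B C" "gyroangle s A B C \<le> pi"
  unfolding gyroangle_def using arccos_range[OF ratio_abs[of "eadd s (- A) B" "eadd s (- A) C"]]
  by auto

lemma sin_half: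
  assumes "0 \<le> t" "t \<le> pi"
  shows "sin (t/2) = sqrt ((1 - cos t)/2)"
proof -
  have "cos t = 1 - 2 * (sin (t/2))^2" using cos_double_sin[of "t/2"] by simp
  hence "(1 - cos t)/2 = (sin (t/2))^2" by simp
  moreover have "sin (t/2) \<ge> 0" using assms by (intro sin_ge_zero) auto
  ultimately show ?thesis by (metis real_sqrt_abs abs_of_nonneg)
qed


lemma det3_kernel:
  fixes n11 n12 n13 n22 n23 n33 x y z :: real
  assumes e1: "n11*x + n12*y + n13*z = 0" and e2: "n12*x + n22*y + n23*z = 0"
    and e3: "n13*x + n23*y + n33*z = 0" and nz: "x \<noteq> 0 \<or> y \<noteq> 0 \<or> z \<noteq> 0"
  shows "n11*(n22*n33 - n23*n23) - n12*(n12*n33 - n23*n13) + n13*(n12*n23 - n22*n13) = 0"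
proof -
  define D where "D = n11*(n22*n33 - n23*n23) - n12*(n12*n33 - n23*n13) + n13*(n12*n23 - n22*n13)"
  have "D*x = (n22*n33 - n23*n23)*(n11*x + n12*y + n13*z) + (n13*n23 - n12*n33)*(n12*x + n22*y + n23*z)
      + (n12*n23 - n13*n22)*(n13*x + n23*y + n33*z)" unfolding D_def by algebra
  hence x: "D*x = 0" using e1 e2 e3 by simp
  have "D*y = (n13*n23 - n12*n33)*(n11*x + n12*y + n13*z) + (n11*n33 - n13*n13)*(n12*x + n22*y + n23*z)
      + (n12*n13 - n11*n23)*(n13*x + n23*y + n33*z)" unfolding D_def by algebra
  hence y: "D*y = 0" using e1 e2 e3 by simp
  have "D*z = (n12*n23 - n13*n22)*(n11*x + n12*y + n13*z) + (n12*n13 - n11*n23)*(n12*x + n22*y + n23*z)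
      + (n11*n22 - n12*n12)*(n13*x + n23*y + n33*z)" unfolding D_def by algebra
  hence z: "D*z = 0" using e1 e2 e3 by simp
  show ?thesis using x y z nz unfolding D_def[symmetric] by auto
qed

lemma kernel_rel:
  fixes a b c d w0 w1 w2 w3 :: real
  assumes E0: "w0 + c*w1 + c*w2 + c*w3 = 0"
    and E1: "c*w0 + w1 + d*w2 + b*w3 = 0"
    and E2: "c*w0 + d*w1 + w2 + a*w3 = 0"
    and E3: "c*w0 + b*w1 + a*w2 + w3 = 0"
    and nz: "w0 \<noteq> 0 \<or> w1 \<noteq> 0 \<or> w2 \<noteq> 0 \<or> w3 \<noteq> 0"
  shows "(1 - a^2 - b^2 - d^2 + 2*a*b*d) * (c^2 - 1) = 2*c^2*(a-1)*(b-1)*(d-1)"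
proof -
  have w0: "w0 = - c*(w1+w2+w3)" using E0 by (simp add: algebra_simps)
  have f1: "(1-c^2)*w1 + (d-c^2)*w2 + (b-c^2)*w3 = 0" using E1 unfolding w0 by (simp add: algebra_simps power2_eq_square)
  have f2: "(d-c^2)*w1 + (1-c^2)*w2 + (a-c^2)*w3 = 0" using E2 unfolding w0 by (simp add: algebra_simps power2_eq_square)
  have f3: "(b-c^2)*w1 + (a-c^2)*w2 + (1-c^2)*w3 = 0" using E3 unfolding w0 by (simp add: algebra_simps power2_eq_square)
  have nz': "w1 \<noteq> 0 \<or> w2 \<noteq> 0 \<or> w3 \<noteq> 0" using nz w0 by auto
  have "(1-c^2)*((1-c^2)*(1-c^2) - (a-c^2)*(a-c^2)) - (d-c^2)*((d-c^2)*(1-c^2) - (a-c^2)*(b-c^2))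
     + (b-c^2)*((d-c^2)*(a-c^2) - (1-c^2)*(b-c^2)) = 0"
    by (rule det3_kernel[OF f1 f2 f3 nz'])
  moreover have "(1-c^2)*((1-c^2)*(1-c^2) - (a-c^2)*(a-c^2)) - (d-c^2)*((d-c^2)*(1-c^2) - (a-c^2)*(b-c^2))
     + (b-c^2)*((d-c^2)*(a-c^2) - (1-c^2)*(b-c^2))
     = 2*c^2*(a-1)*(b-1)*(d-1) - (1 - a^2 - b^2 - d^2 + 2*a*b*d) * (c^2 - 1)"
    by algebra
  ultimately show ?thesis by simp
qed

lemma final_alg:
  fixes x y z c :: real
  assumes x: "x > 1" and y: "y > 1" and z: "z > 1" and c: "c > 1"
    and rel: "(1 - y^2 - x^2 - z^2 + 2*y*x*z) * (c^2 - 1) = 2*c^2*(y-1)*(x-1)*(z-1)"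
  shows "sqrt (1 - ((x*y - z) / (sqrt (x^2 - 1) * sqrt (y^2 - 1)))^2)
    = 2 * c / sqrt ((x + 1) * (y + 1)) * sqrt ((1 - (c*c - z) / (sqrt (c^2 - 1) * sqrt (c^2 - 1))) / 2)"
proof -
  have x2: "x^2 - 1 > 0" using x by (simp add: one_less_power)
  have y2: "y^2 - 1 > 0" using y by (simp add: one_less_power)
  have c2: "c^2 - 1 > 0" using c by (simp add: one_less_power)
  have l: "((x*y - z) / (sqrt (x^2 - 1) * sqrt (y^2 - 1)))^2 = (x*y - z)^2 / ((x^2 - 1)*(y^2 - 1))"
    using x2 y2 by (simp add: power_divide power_mult_distrib)
  have r1: "sqrt (c^2 - 1) * sqrt (c^2 - 1) = c^2 - 1" using c2 by simp
  have r2: "2 * c / sqrt ((x + 1) * (y + 1)) * sqrt ((1 - (c*c - z) / (c^2 - 1)) / 2)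
     = sqrt (4 * c^2 * ((1 - (c*c - z) / (c^2 - 1)) / 2) / ((x + 1) * (y + 1)))"
    using c x y by (simp add: real_sqrt_mult real_sqrt_divide real_sqrt_abs) (simp add: field_simps)
  have e: "1 - (x*y - z)^2 / ((x^2 - 1)*(y^2 - 1)) = 4 * c^2 * ((1 - (c*c - z) / (c^2 - 1)) / 2) / ((x + 1) * (y + 1))"
  proof -
    have xa: "x + 1 > 0" "x - 1 > 0" "y + 1 > 0" "y - 1 > 0" using x y by auto
    have h1: "1 - (x*y - z)^2 / ((x^2 - 1)*(y^2 - 1)) = (1 - y^2 - x^2 - z^2 + 2*y*x*z) / ((x^2 - 1)*(y^2 - 1))"
    proof -
      have P: "(x^2 - 1)*(y^2 - 1) > 0" using x2 y2 by simp
      have "1 - (x*y - z)^2 / ((x^2 - 1)*(y^2 - 1)) = ((x^2 - 1)*(y^2 - 1) - (x*y - z)^2) / ((x^2 - 1)*(y^2 - 1))"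
        using P x2 y2 by (simp add: diff_divide_distrib)
      also have "(x^2 - 1)*(y^2 - 1) - (x*y - z)^2 = 1 - y^2 - x^2 - z^2 + 2*y*x*z" by algebra
      finally show ?thesis .
    qed
    have h2: "(1 - y^2 - x^2 - z^2 + 2*y*x*z) = 2*c^2*(y-1)*(x-1)*(z-1) / (c^2 - 1)"
      using rel c2 by (simp add: field_simps)
    have h3: "x^2 - 1 = (x-1)*(x+1)" "y^2 - 1 = (y-1)*(y+1)" by (simp_all add: algebra_simps power2_eq_square)
    have "1 - (x*y - z)^2 / ((x^2 - 1)*(y^2 - 1)) = (2*c^2*(y-1)*(x-1)*(z-1) / (c^2 - 1)) / (((x-1)*(x+1))*((y-1)*(y+1)))"
      unfolding h1 h2 h3(1)[symmetric] h3(2)[symmetric] ..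
    also have "\<dots> = 4 * c^2 * ((1 - (c*c - z) / (c^2 - 1)) / 2) / ((x + 1) * (y + 1))"
    proof -
      have k: "1 - (c*c - z) / (c^2 - 1) = (z - 1) / (c^2 - 1)"
        using c2 by (simp add: field_simps power2_eq_square)
      have gen: "\<And>a b e p q Z C::real. a>0 \<Longrightarrow> b>0 \<Longrightarrow> e>0 \<Longrightarrow> p>0 \<Longrightarrow> q>0 \<Longrightarrow>
         (2*C*b*a*Z/e)/((a*p)*(b*q)) = 4*C*((Z/e)/2)/(p*q)"
        by (simp add: field_simps)
      show ?thesis unfolding k by (rule gen) (use xa c2 in auto)
    qed
    finally show ?thesis .
  qed
  show ?thesis unfolding l r1 r2 e ..
qed


lemma plane_param:
  fixes B1 B2 B3 X :: "'a::real_inner"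
  assumes b1: "norm B1 < s" and X: "X \<in> gyroplane s B1 B2 B3"
  shows "\<exists>\<alpha> \<beta> t. t > 0
     \<and> t = 1 + \<alpha> * ((B1 \<bullet> eadd s (- B1) B2)/s^2) + \<beta> * ((B1 \<bullet> eadd s (- B1) B3)/s^2)
     \<and> t *\<^sub>R X = B1
         + \<alpha> *\<^sub>R ((1/gam s B1) *\<^sub>R eadd s (- B1) B2 + ((1/s^2) * (gam s B1/(1 + gam s B1)) * (B1 \<bullet> eadd s (- B1) B2)) *\<^sub>R B1)
         + \<beta> *\<^sub>R ((1/gam s B1) *\<^sub>R eadd s (- B1) B3 + ((1/s^2) * (gam s B1/(1 + gam s B1)) * (B1 \<bullet> eadd s (- B1) B3)) *\<^sub>R B1)
     \<and> X = eadd s B1 (\<alpha> *\<^sub>R eadd s (- B1) B2 + \<beta> *\<^sub>R eadd s (- B1) B3)"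
proof -
  define v1 where "v1 = eadd s (- B1) B2"
  define v2 where "v2 = eadd s (- B1) B3"
  define g where "g = gam s B1"
  define k where "k = (1/s^2) * (g/(1 + g))"
  have s: "s > 0" by (rule s_pos[OF b1])
  obtain x where Xx: "X = eadd s B1 x" and xs: "x \<in> span {v1, v2}" and xn: "norm x < s"
    using X unfolding gyroplane_def sball_def v1_def v2_def by auto
  obtain a b where ab: "x = a *\<^sub>R v1 + b *\<^sub>R v2" using span2[OF xs] by blast
  define t where "t = 1 + (B1 \<bullet> x)/s^2"
  have tpos: "t > 0" unfolding t_def using inner_lt[OF b1 xn] s by (simp add: field_simps abs_less_iff)
  have bx: "B1 \<bullet> x = a * (B1 \<bullet> v1) + b * (B1 \<bullet> v2)" unfolding ab by (simp add: inner_add_right)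
  have t: "t = 1 + a * ((B1 \<bullet> v1)/s^2) + b * ((B1 \<bullet> v2)/s^2)" unfolding t_def bx by (simp add: add_divide_distrib)
  have "X = (1/t) *\<^sub>R (B1 + (1/g) *\<^sub>R x + (k * (B1 \<bullet> x)) *\<^sub>R B1)"
    unfolding Xx eadd_def t_def g_def k_def ..
  hence "t *\<^sub>R X = B1 + (1/g) *\<^sub>R x + (k * (B1 \<bullet> x)) *\<^sub>R B1" using tpos by simp
  also have "\<dots> = B1 + a *\<^sub>R ((1/g) *\<^sub>R v1 + (k * (B1 \<bullet> v1)) *\<^sub>R B1)
                   + b *\<^sub>R ((1/g) *\<^sub>R v2 + (k * (B1 \<bullet> v2)) *\<^sub>R B1)"
    unfolding bx unfolding ab by (simp add: algebra_simps)
  finally have tx: "t *\<^sub>R X = B1 + a *\<^sub>R ((1/g) *\<^sub>R v1 + (k * (B1 \<bullet> v1)) *\<^sub>R B1)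
                   + b *\<^sub>R ((1/g) *\<^sub>R v2 + (k * (B1 \<bullet> v2)) *\<^sub>R B1)" .
  show ?thesis
    apply (rule exI[of _ a], rule exI[of _ b], rule exI[of _ t])
    using tpos t tx Xx ab unfolding v1_def v2_def g_def k_def by simp
qed

lemma four_dep:
  fixes p0 p1 p2 p3 :: "real \<times> real \<times> real"
  assumes d: "distinct [p0, p1, p2, p3]"
  shows "\<exists>l0 l1 l2 l3. (l0 \<noteq> 0 \<or> l1 \<noteq> 0 \<or> l2 \<noteq> 0 \<or> l3 \<noteq> 0) \<and>
           l0 *\<^sub>R p0 + l1 *\<^sub>R p1 + l2 *\<^sub>R p2 + l3 *\<^sub>R p3 = 0"
proof -
  let ?S = "set [p0, p1, p2, p3]"
  have c: "card ?S = 4" using distinct_card[OF d] by simp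
  have "dependent ?S" by (rule dependent_biggerset) (use c in simp)
  then obtain u where u: "\<exists>v\<in>?S. u v \<noteq> 0" "(\<Sum>v\<in>?S. u v *\<^sub>R v) = 0"
    using dependent_finite[of ?S] by auto
  have "(\<Sum>v\<in>?S. u v *\<^sub>R v) = u p0 *\<^sub>R p0 + u p1 *\<^sub>R p1 + u p2 *\<^sub>R p2 + u p3 *\<^sub>R p3"
    using sum.distinct_set_conv_list[OF d, of "\<lambda>v. u v *\<^sub>R v"] by (simp add: add.assoc)
  thus ?thesis using u by (intro exI[of _ "u p0"] exI[of _ "u p1"] exI[of _ "u p2"] exI[of _ "u p3"]) auto
qed

lemma plane_param2:
  fixes B1 B2 B3 :: "'a::real_inner"
  assumes b1: "norm B1 < s"
  shows "\<exists>e1 e2 F1 F2 v1 v2. \<forall>X \<in> gyroplane s B1 B2 B3. \<exists>\<alpha> \<beta> t. t > 0 \<and> t = 1 + \<alpha>*e1 + \<beta>*e2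
     \<and> t *\<^sub>R X = B1 + \<alpha> *\<^sub>R F1 + \<beta> *\<^sub>R F2 \<and> X = eadd s B1 (\<alpha> *\<^sub>R v1 + \<beta> *\<^sub>R v2)"
  using plane_param[OF b1] by blast

lemma coplanar_dep:
  fixes B1 B2 B3 Q0 Q1 Q2 Q3 :: "'a::real_inner"
  assumes b1: "norm B1 < s"
    and q: "Q0 \<in> gyroplane s B1 B2 B3" "Q1 \<in> gyroplane s B1 B2 B3"
           "Q2 \<in> gyroplane s B1 B2 B3" "Q3 \<in> gyroplane s B1 B2 B3"
    and d: "distinct [Q0, Q1, Q2, Q3]"
  shows "\<exists>m0 m1 m2 m3. (m0 \<noteq> 0 \<or> m1 \<noteq> 0 \<or> m2 \<noteq> 0 \<or> m3 \<noteq> 0) \<and> m0 + m1 + m2 + m3 = 0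
     \<and> m0 *\<^sub>R Q0 + m1 *\<^sub>R Q1 + m2 *\<^sub>R Q2 + m3 *\<^sub>R Q3 = 0"
proof -
  obtain e1 e2 F1 F2 v1 v2 where P: "\<forall>X \<in> gyroplane s B1 B2 B3. \<exists>\<alpha> \<beta> t. t > 0 \<and> t = 1 + \<alpha>*e1 + \<beta>*e2
     \<and> t *\<^sub>R X = B1 + \<alpha> *\<^sub>R F1 + \<beta> *\<^sub>R F2 \<and> X = eadd s B1 (\<alpha> *\<^sub>R v1 + \<beta> *\<^sub>R v2)"
    using plane_param2[OF b1] by blast
  obtain a0 b0 t0 where 0: "t0 > 0" "t0 = 1 + a0*e1 + b0*e2" "t0 *\<^sub>R Q0 = B1 + a0 *\<^sub>R F1 + b0 *\<^sub>R F2"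
      "Q0 = eadd s B1 (a0 *\<^sub>R v1 + b0 *\<^sub>R v2)" using P q(1) by blast
  obtain a1 b1' t1 where 1: "t1 > 0" "t1 = 1 + a1*e1 + b1'*e2" "t1 *\<^sub>R Q1 = B1 + a1 *\<^sub>R F1 + b1' *\<^sub>R F2"
      "Q1 = eadd s B1 (a1 *\<^sub>R v1 + b1' *\<^sub>R v2)" using P q(2) by blast
  obtain a2 b2 t2 where 2: "t2 > 0" "t2 = 1 + a2*e1 + b2*e2" "t2 *\<^sub>R Q2 = B1 + a2 *\<^sub>R F1 + b2 *\<^sub>R F2"
      "Q2 = eadd s B1 (a2 *\<^sub>R v1 + b2 *\<^sub>R v2)" using P q(3) by blast
  obtain a3 b3 t3 where 3: "t3 > 0" "t3 = 1 + a3*e1 + b3*e2" "t3 *\<^sub>R Q3 = B1 + a3 *\<^sub>R F1 + b3 *\<^sub>R F2"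
      "Q3 = eadd s B1 (a3 *\<^sub>R v1 + b3 *\<^sub>R v2)" using P q(4) by blast
  have dp: "distinct [(1::real, a0, b0), (1, a1, b1'), (1, a2, b2), (1, a3, b3)]"
    using d 0(4) 1(4) 2(4) 3(4) by auto
  obtain l0 l1 l2 l3 where l: "l0 \<noteq> 0 \<or> l1 \<noteq> 0 \<or> l2 \<noteq> 0 \<or> l3 \<noteq> 0"
    "l0 *\<^sub>R (1::real, a0, b0) + l1 *\<^sub>R (1, a1, b1') + l2 *\<^sub>R (1, a2, b2) + l3 *\<^sub>R (1, a3, b3) = 0"
    using four_dep[OF dp] by blast
  have s1: "l0 + l1 + l2 + l3 = 0" and sa: "l0*a0 + l1*a1 + l2*a2 + l3*a3 = 0"
    and sb: "l0*b0 + l1*b1' + l2*b2 + l3*b3 = 0"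
    using l(2) by (simp_all add: prod_eq_iff zero_prod_def)
  show ?thesis
  proof (intro exI conjI)
    show "l0*t0 \<noteq> 0 \<or> l1*t1 \<noteq> 0 \<or> l2*t2 \<noteq> 0 \<or> l3*t3 \<noteq> 0" using l(1) 0(1) 1(1) 2(1) 3(1) by auto
    have "l0*t0 + l1*t1 + l2*t2 + l3*t3 = (l0 + l1 + l2 + l3) + (l0*a0 + l1*a1 + l2*a2 + l3*a3)*e1
        + (l0*b0 + l1*b1' + l2*b2 + l3*b3)*e2"
      unfolding 0(2) 1(2) 2(2) 3(2) by (simp add: algebra_simps)
    thus "l0*t0 + l1*t1 + l2*t2 + l3*t3 = 0" using s1 sa sb by simp
    have "(l0*t0) *\<^sub>R Q0 + (l1*t1) *\<^sub>R Q1 + (l2*t2) *\<^sub>R Q2 + (l3*t3) *\<^sub>R Q3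
       = l0 *\<^sub>R (t0 *\<^sub>R Q0) + l1 *\<^sub>R (t1 *\<^sub>R Q1) + l2 *\<^sub>R (t2 *\<^sub>R Q2) + l3 *\<^sub>R (t3 *\<^sub>R Q3)" by simp
    also have "\<dots> = (l0 + l1 + l2 + l3) *\<^sub>R B1 + (l0*a0 + l1*a1 + l2*a2 + l3*a3) *\<^sub>R F1
        + (l0*b0 + l1*b1' + l2*b2 + l3*b3) *\<^sub>R F2"
      unfolding 0(3) 1(3) 2(3) 3(3) by (simp add: algebra_simps)
    finally show "(l0*t0) *\<^sub>R Q0 + (l1*t1) *\<^sub>R Q1 + (l2*t2) *\<^sub>R Q2 + (l3*t3) *\<^sub>R Q3 = 0"
      using s1 sa sb by simp
  qed
qed

lemma GG_kernel:
  fixes P Q0 Q1 Q2 Q3 :: "'a::real_inner"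
  assumes p: "norm P < s" and q: "norm Q0 < s" "norm Q1 < s" "norm Q2 < s" "norm Q3 < s"
    and m1: "m0 + m1 + m2 + m3 = 0"
    and m2: "m0 *\<^sub>R Q0 + m1 *\<^sub>R Q1 + m2 *\<^sub>R Q2 + m3 *\<^sub>R Q3 = 0"
  shows "(m0 / gam s Q0) * GG s Q0 P + (m1 / gam s Q1) * GG s Q1 P
       + (m2 / gam s Q2) * GG s Q2 P + (m3 / gam s Q3) * GG s Q3 P = 0"
proof -
  have g: "gam s Q0 \<noteq> 0" "gam s Q1 \<noteq> 0" "gam s Q2 \<noteq> 0" "gam s Q3 \<noteq> 0"
    using gam_facts(1) q by (metis less_irrefl)+
  have ip: "m0 * (Q0 \<bullet> P) + m1 * (Q1 \<bullet> P) + m2 * (Q2 \<bullet> P) + m3 * (Q3 \<bullet> P) = 0"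
    using arg_cong[OF m2, of "\<lambda>v. v \<bullet> P"] by (simp add: inner_add_left)
  have "(m0 / gam s Q0) * GG s Q0 P + (m1 / gam s Q1) * GG s Q1 P
       + (m2 / gam s Q2) * GG s Q2 P + (m3 / gam s Q3) * GG s Q3 P
     = gam s P * ((m0 + m1 + m2 + m3)
         - (m0 * (Q0 \<bullet> P) + m1 * (Q1 \<bullet> P) + m2 * (Q2 \<bullet> P) + m3 * (Q3 \<bullet> P))/s^2)"
    unfolding GG_def using g s_pos[OF p] by (simp add: field_simps)
  thus ?thesis using m1 ip by simp
qed

lemma gyrodist_zero:
  fixes A B :: "'a::real_inner"
  assumes a: "norm A < s" and b: "norm B < s"
  shows "gyrodist s A B = 0 \<longleftrightarrow> A = B"
proof
  assume "gyrodist s A B = 0"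
  hence "s^2 * (1 - 1 / (GG s A B)^2) = 0" using norm_eadd_sq[OF a b] unfolding gyrodist_def by simp
  hence "1 / (GG s A B)^2 = 1" using s_pos[OF a] by simp
  hence "(GG s A B)^2 = 1" using GG_pos[OF a b] by (simp add: field_simps)
  hence "GG s A B = 1" using GG_pos[OF a b] by (simp add: power2_eq_1_iff)
  thus "A = B" by (rule GG_eq1[OF a b])
next
  assume "A = B"
  thus "gyrodist s A B = 0" using norm_eadd_sq[OF b b] GG_self[OF b] unfolding gyrodist_def by simp
qed

lemma GG_radius:
  fixes Oc A :: "'a::real_inner"
  assumes oc: "norm Oc < s" and a: "norm A < s" and r: "gyrodist s Oc A = R"
  shows "GG s Oc A = gamr s R"
  using gam_eadd[OF oc a] r unfolding gyrodist_def gam_def gamr_def by simp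


theorem mainTheorem1:
  fixes s R :: real and Oc A1 A2 A3 B1 B2 B3 :: "real ^ 'n"
  assumes "s > 0" and "CARD('n) \<ge> 2"
    and "B1 \<in> sball s" "B2 \<in> sball s" "B3 \<in> sball s"
    and "gyro_bary_indep s B1 B2 B3"
    and "Oc \<in> gyroplane s B1 B2 B3"
    and "A1 \<in> gyrocircle s (gyroplane s B1 B2 B3) Oc R"
    and "A2 \<in> gyrocircle s (gyroplane s B1 B2 B3) Oc R"
    and "A3 \<in> gyrocircle s (gyroplane s B1 B2 B3) Oc R"
    and "A1 \<noteq> A2" "A1 \<noteq> A3" "A2 \<noteq> A3"
  shows "sin (gyroangle s A3 A1 A2) =
           2 * gamr s R / sqrt ((gam s (eadd s (- A1) A3) + 1) * (gam s (eadd s (- A2) A3) + 1))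
           * sin (gyroangle s Oc A1 A2 / 2)"
proof -
  note as = assms
  have pl: "gyroplane s B1 B2 B3 \<subseteq> sball s" unfolding gyroplane_def by auto
  have b1: "norm B1 < s" using as(3) unfolding sball_def by simp
  have o: "norm Oc < s" using as(7) pl unfolding sball_def by auto
  have p1: "A1 \<in> gyroplane s B1 B2 B3" and r1: "gyrodist s Oc A1 = R"
    using as(8) unfolding gyrocircle_def by auto
  have p2: "A2 \<in> gyroplane s B1 B2 B3" and r2: "gyrodist s Oc A2 = R"
    using as(9) unfolding gyrocircle_def by auto
  have p3: "A3 \<in> gyroplane s B1 B2 B3" and r3: "gyrodist s Oc A3 = R"
    using as(10) unfolding gyrocircle_def by auto
  have a1: "norm A1 < s" using p1 pl unfolding sball_def by auto
  have a2: "norm A2 < s" using p2 pl unfolding sball_def by auto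
  have a3: "norm A3 < s" using p3 pl unfolding sball_def by auto
  have oa1: "Oc \<noteq> A1"
  proof
    assume "Oc = A1"
    hence "R = 0" using r1 gyrodist_zero[OF o a1] by simp
    hence "Oc = A2" using r2 gyrodist_zero[OF o a2] by simp
    thus False using \<open>Oc = A1\<close> as(11) by simp
  qed
  have oa2: "Oc \<noteq> A2"
  proof
    assume "Oc = A2"
    hence "R = 0" using r2 gyrodist_zero[OF o a2] by simp
    hence "Oc = A1" using r1 gyrodist_zero[OF o a1] by simp
    thus False using \<open>Oc = A2\<close> as(11) by simp
  qed
  have oa3: "Oc \<noteq> A3"
  proof
    assume "Oc = A3"
    hence "R = 0" using r3 gyrodist_zero[OF o a3] by simp
    hence "Oc = A1" using r1 gyrodist_zero[OF o a1] by simp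
    thus False using \<open>Oc = A3\<close> as(12) by simp
  qed
  define c where "c = gamr s R"
  have c1: "GG s Oc A1 = c" unfolding c_def by (rule GG_radius[OF o a1 r1])
  have c2: "GG s Oc A2 = c" unfolding c_def by (rule GG_radius[OF o a2 r2])
  have c3: "GG s Oc A3 = c" unfolding c_def by (rule GG_radius[OF o a3 r3])
  have cg: "c > 1" using GG_gt1[OF o a1 oa1] c1 by simp
  define a where "a = GG s A2 A3"
  define b where "b = GG s A1 A3"
  define d where "d = GG s A1 A2"
  have ag: "a > 1" unfolding a_def by (rule GG_gt1[OF a2 a3 as(13)])
  have bg: "b > 1" unfolding b_def by (rule GG_gt1[OF a1 a3 as(12)])
  have dg: "d > 1" unfolding d_def by (rule GG_gt1[OF a1 a2 as(11)])
  have dist: "distinct [Oc, A1, A2, A3]" using oa1 oa2 oa3 as(11-13) by simp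
  obtain m0 m1 m2 m3 where m: "m0 \<noteq> 0 \<or> m1 \<noteq> 0 \<or> m2 \<noteq> 0 \<or> m3 \<noteq> 0"
      "m0 + m1 + m2 + m3 = 0" "m0 *\<^sub>R Oc + m1 *\<^sub>R A1 + m2 *\<^sub>R A2 + m3 *\<^sub>R A3 = 0"
    using coplanar_dep[OF b1 as(7) p1 p2 p3 dist] by blast
  define w0 where "w0 = m0 / gam s Oc"
  define w1 where "w1 = m1 / gam s A1"
  define w2 where "w2 = m2 / gam s A2"
  define w3 where "w3 = m3 / gam s A3"
  have gp: "gam s Oc > 0" "gam s A1 > 0" "gam s A2 > 0" "gam s A3 > 0"
    using gam_facts(1) o a1 a2 a3 by auto
  have wnz: "w0 \<noteq> 0 \<or> w1 \<noteq> 0 \<or> w2 \<noteq> 0 \<or> w3 \<noteq> 0"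
    using m(1) gp unfolding w0_def w1_def w2_def w3_def by auto
  note K = GG_kernel[OF _ o a1 a2 a3 m(2) m(3), folded w0_def w1_def w2_def w3_def]
  have sy: "GG s A1 Oc = c" "GG s A2 Oc = c" "GG s A3 Oc = c" "GG s A2 A1 = d" "GG s A3 A1 = b"
      "GG s A3 A2 = a"
    using c1 c2 c3 unfolding a_def b_def d_def by (simp_all add: GG_sym)
  have E0: "w0 + c*w1 + c*w2 + c*w3 = 0" using K[OF o] sy GG_self[OF o] by (simp add: algebra_simps)
  have E1: "c*w0 + w1 + d*w2 + b*w3 = 0" using K[OF a1] sy c1 GG_self[OF a1] by (simp add: algebra_simps)
  have E2: "c*w0 + d*w1 + w2 + a*w3 = 0" using K[OF a2] sy c2 GG_self[OF a2] unfolding d_def by (simp add: algebra_simps)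
  have E3: "c*w0 + b*w1 + a*w2 + w3 = 0" using K[OF a3] sy c3 GG_self[OF a3] unfolding b_def a_def by (simp add: algebra_simps)
  have rel: "(1 - a^2 - b^2 - d^2 + 2*a*b*d) * (c^2 - 1) = 2*c^2*(a-1)*(b-1)*(d-1)"
    by (rule kernel_rel[OF E0 E1 E2 E3 wnz])
  have lhs: "sin (gyroangle s A3 A1 A2) =
     sqrt (1 - ((b * a - d) / (sqrt (b^2 - 1) * sqrt (a^2 - 1)))^2)"
    using sin_gyroangle[OF a3 a1 a2 as(12)[symmetric] as(13)[symmetric]] sy unfolding d_def by simp
  have ang: "0 \<le> gyroangle s Oc A1 A2" "gyroangle s Oc A1 A2 \<le> pi" by (rule gyroangle_range)+
  have rhs: "sin (gyroangle s Oc A1 A2 / 2) =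
      sqrt ((1 - (c*c - d) / (sqrt (c^2 - 1) * sqrt (c^2 - 1))) / 2)"
    unfolding sin_half[OF ang] cos_gyroangle[OF o a1 a2 oa1 oa2] c1 c2 d_def ..
  have g13: "gam s (eadd s (- A1) A3) = b" unfolding b_def by (rule gam_eadd[OF a1 a3])
  have g23: "gam s (eadd s (- A2) A3) = a" unfolding a_def by (rule gam_eadd[OF a2 a3])
  have fin: "sqrt (1 - ((b * a - d) / (sqrt (b^2 - 1) * sqrt (a^2 - 1)))^2)
    = 2 * c / sqrt ((b + 1) * (a + 1)) * sqrt ((1 - (c*c - d) / (sqrt (c^2 - 1) * sqrt (c^2 - 1))) / 2)"
    by (rule final_alg[OF bg ag dg cg rel])
  show ?thesis unfolding lhs rhs g13 g23 c_def[symmetric] fin ..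
qed

end
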